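(* Fix $p\in\mathbb{N}_0$, and let the polynomials $q_{p,\nu}$ and the coefficients $\alpha_{p,\nu},\beta_{p,\nu}$ be defined by the recursive construction described in the context. Then for every integer $\nu\ge1$ with $\nu\le p$, \[ q_{p,\nu-1}^{(\nu)}(\pm1)=\frac{(\pm1)^p}{(-2)^{\nu+1}\,\nu!}\left[\frac{(p+1+\nu)!}{(p+1-\nu)!}\pm\frac{(p+\nu)!}{(p-\nu)!}\right], \] and \[ \alpha_{p,\nu}=\frac{-1}{(-2)^{\nu+1}\,\nu!}\,\frac{(p+1+\nu)!}{(p+1-\nu)!},\qquad \beta_{p,\nu}=\frac{-1}{(-2)^{\nu+1}\,\nu!}\,\frac{(p+\nu)!}{(p-\nu)!}. \]
   Context: $L_j$ denotes the Legendre polynomial of degree $j$ on $(-1,1)$, normalized so that $L_j(1)=1$. The $n$-th primitive of $L_i$ is defined by $\psi_{i,0}:=L_i$ and $\psi_{i,n}(x):=\int_{-1}^x\psi_{i,n-1}(\zeta)\,d\zeta$ for $n\ge1$. Recursive construction: - Set $q_{p,0}:=\tfrac12(L_p+L_{p+1})$. - For $\nu\ge0$, set $q_{p,\nu+1}:=q_{p,\nu}+\alpha_{p,\nu+1}\psi_{p,\nu+1}+\beta_{p,\nu+1}\psi_{p+1,\nu+1}$, where \[ \alpha_{p,\nu+1}:=-\frac{q_{p,\nu}^{(\nu+1)}(1)+(-1)^p q_{p,\nu}^{(\nu+1)}(-1)}{2},\qquad \beta_{p,\nu+1}:=-\frac{q_{p,\nu}^{(\nu+1)}(1)-(-1)^p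 q_{p,\nu}^{(\nu+1)}(-1)}{2}. \] *)

theory Defs
  imports "HOL-Computational_Algebra.Polynomial"
begin

definition legendre :: "nat \<Rightarrow> real poly" where
  "legendre n = smult (1 / (2 ^ n * fact n)) ((pderiv ^^ n) ([:-1, 0, 1:] ^ n))"

text \<open>Formal antiderivative with zero constant term, and the primitive vanishing at -1,
  i.e. the polynomial x mapsto integral from -1 to x.\<close>
definition pint :: "real poly \<Rightarrow> real poly" where
  "pint p = Poly (0 # map (\<lambda>i. coeff p i / real (Suc i)) [0..<Suc (degree p)])"

definition prim :: "real poly \<Rightarrow> real poly" where
  "prim p = pint p - [:poly (pint p) (-1):]"

fun psi :: "nat \<Rightarrow> nat \<Rightarrow> real poly" where
  "psi i 0 = legendre i"
| "psi i (Suc n) = prim (psi i n)"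

definition dval :: "nat \<Rightarrow> real poly \<Rightarrow> real \<Rightarrow> real" where
  "dval k q x = poly ((pderiv ^^ k) q) x"

definition alpha_step :: "nat \<Rightarrow> nat \<Rightarrow> real poly \<Rightarrow> real" where
  "alpha_step p \<nu> q = - (dval (Suc \<nu>) q 1 + (-1) ^ p * dval (Suc \<nu>) q (-1)) / 2"

definition beta_step :: "nat \<Rightarrow> nat \<Rightarrow> real poly \<Rightarrow> real" where
  "beta_step p \<nu> q = - (dval (Suc \<nu>) q 1 - (-1) ^ p * dval (Suc \<nu>) q (-1)) / 2"

fun qpol :: "nat \<Rightarrow> nat \<Rightarrow> real poly" where
  "qpol p 0 = smult (1/2) (legendre p + legendre (Suc p))"
| "qpol p (Suc \<nu>) = qpol p \<nu>
     + smult (alpha_step p \<nu> (qpol p \<nu>)) (psi p (Suc \<nu>))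
     + smult (beta_step p \<nu> (qpol p \<nu>)) (psi (Suc p) (Suc \<nu>))"

fun alpha :: "nat \<Rightarrow> nat \<Rightarrow> real" where
  "alpha p 0 = undefined"
| "alpha p (Suc \<nu>) = alpha_step p \<nu> (qpol p \<nu>)"

fun beta :: "nat \<Rightarrow> nat \<Rightarrow> real" where
  "beta p 0 = undefined"
| "beta p (Suc \<nu>) = beta_step p \<nu> (qpol p \<nu>)"

end

theory Submission
  imports Defs
begin

lemma iter_pderiv_add: "(pderiv ^^ k) (p + q) = (pderiv ^^ k) p + (pderiv ^^ k) (q :: real poly)"
  by (induct k) (auto simp: pderiv_add)
lemma iter_pderiv_smult: "(pderiv ^^ k) (smult c p) = smult c ((pderiv ^^ k) (p :: real poly))"
  by (induct k) (auto simp: pderiv_smult)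
lemma iter_pderiv_pcompose: "(pderiv ^^ k) (pcompose q [:a,1:]) = pcompose ((pderiv ^^ k) q) [:a,1::real:]"
  by (induct k) (auto simp: pderiv_pcompose pderiv_pCons)
lemma coeff_iter_pderiv: "coeff ((pderiv ^^ k) q) n = (fact (n+k) / fact n) * coeff (q :: real poly) (n+k)"
proof (induct k arbitrary: n)
  case 0 then show ?case by simp
next
  case (Suc k)
  have "coeff ((pderiv ^^ Suc k) q) n = of_nat (Suc n) * coeff ((pderiv ^^ k) q) (Suc n)"
    by (simp add: coeff_pderiv)
  also have "\<dots> = of_nat (Suc n) * ((fact (Suc n + k) / fact (Suc n)) * coeff q (Suc n + k))"
    using Suc by simp
  also have "\<dots> = (fact (n + Suc k) / fact n) * coeff q (n + Suc k)"
    by (simp add: fact_Suc field_simps del: of_nat_Suc)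
  finally show ?case .
qed
lemma poly_iter_pderiv_shift: "poly ((pderiv ^^ k) q) a = fact k * coeff (pcompose q [:a,1::real:]) k"
proof -
  have "poly ((pderiv ^^ k) q) a = poly (pcompose ((pderiv ^^ k) q) [:a,1:]) 0"
    by (simp add: poly_pcompose)
  also have "\<dots> = coeff ((pderiv ^^ k) (pcompose q [:a,1:])) 0"
    by (simp add: iter_pderiv_pcompose poly_0_coeff_0)
  also have "\<dots> = fact k * coeff (pcompose q [:a,1::real:]) k"
    by (simp add: coeff_iter_pderiv)
  finally show ?thesis .
qed
lemma pcompose_power: "pcompose (p ^ n) r = (pcompose p r) ^ n" for p r :: "real poly"
  by (induct n) (auto simp: pcompose_mult pcompose_1)
lemma x_pow: "[:0,1::real:] ^ n = monom 1 n"
  by (induct n) (auto simp: monom_Suc)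

lemma coeff_lin_pow: "coeff ([:b,1::real:] ^ n) k = (if k \<le> n then of_nat (n choose k) * b ^ (n - k) else 0)"
proof (cases "k \<le> n")
  case True then show ?thesis by (simp add: coeff_linear_poly_power)
next
  case False
  have "degree ([:b,1::real:] ^ n) \<le> n"
    by (metis degree_linear_power order_refl)
  then show ?thesis using False by (simp add: coeff_eq_0)
qed

lemma legendre_shift_coeff:
  assumes "a = 1 \<or> a = -1"
  shows "coeff (pcompose ([:-1,0,1::real:] ^ n) [:a,1:]) (k + n) =
     (if k \<le> n then of_nat (n choose k) * (2*a) ^ (n - k) else 0)"
proof -
  have "pcompose [:-1,0,1::real:] [:a,1:] = [:0,1:] * [:2*a,1:]"
    using assms by (auto simp: pcompose_pCons algebra_simps)
  then have "pcompose ([:-1,0,1::real:] ^ n) [:a,1:] = ([:0,1:] * [:2*a,1:]) ^ n"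
    by (simp only: pcompose_power)
  also have "\<dots> = monom 1 n * [:2*a,1:] ^ n"
    by (simp only: power_mult_distrib x_pow)
  finally have "pcompose ([:-1,0,1::real:] ^ n) [:a,1:] = monom 1 n * [:2*a,1:] ^ n" .
  then show ?thesis by (simp add: coeff_monom_mult coeff_lin_pow)
qed

lemma legendre_dval:
  assumes "a = 1 \<or> a = -1"
  shows "dval k (legendre n) a = (if k \<le> n then fact (n+k) * of_nat (n choose k) * (2*a)^(n-k) / (2^n * fact n) else 0)"
proof -
  have "dval k (legendre n) a = 1 / (2 ^ n * fact n) * poly ((pderiv ^^ (k + n)) ([:-1, 0, 1:] ^ n)) a"
    by (simp add: dval_def legendre_def iter_pderiv_smult funpow_add)
  also have "\<dots> = 1 / (2 ^ n * fact n) * (fact (k + n) * (if k \<le> n then of_nat (n choose k) * (2*a) ^ (n - k) else 0))"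
    by (simp add: poly_iter_pderiv_shift legendre_shift_coeff[OF assms])
  finally show ?thesis by (cases "k \<le> n") (simp_all add: add.commute[of k n])
qed

definition Dl :: "nat \<Rightarrow> nat \<Rightarrow> real" where
  "Dl n k = (if k \<le> n then fact (n+k) / (2^k * fact k * fact (n-k)) else 0)"

lemma leg_p1: "dval k (legendre n) 1 = Dl n k"
proof (cases "k \<le> n")
  case True
  have c: "real (n choose k) = fact n / (fact k * fact (n-k))"
    using True by (simp add: binomial_fact)
  have p: "(2::real) ^ n = 2^k * 2^(n-k)"
    using True by (metis le_add_diff_inverse power_add)
  have "dval k (legendre n) 1 = fact (n+k) * of_nat (n choose k) * (2*1)^(n-k) / (2^n * fact n)"
    using True legendre_dval[of 1 k n] by simp
  then show ?thesis using True unfolding Dl_def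
    by (simp add: c p field_simps)
qed (simp add: legendre_dval Dl_def)

lemma leg_m1: "dval k (legendre n) (-1) = (-1)^(n+k) * Dl n k"
proof (cases "k \<le> n")
  case True
  have c: "real (n choose k) = fact n / (fact k * fact (n-k))"
    using True by (simp add: binomial_fact)
  have p: "(2::real) ^ n = 2^k * 2^(n-k)"
    using True by (metis le_add_diff_inverse power_add)
  have e: "(-1::real)^(n+k) = (-1)^(n-k)"
  proof -
    have "n + k = (n - k) + 2 * k" using True by simp
    then have "(-1::real)^(n+k) = (-1)^((n-k)+2*k)" by (rule arg_cong)
    also have "\<dots> = (-1)^(n-k)" by (simp only: power_add power_mult) simp
    finally show ?thesis .
  qed
  have e2: "(-1::real)^(k+n) = (-1)^(n-k)" by (metis e add.commute)
  have m: "(-2::real) ^ (n-k) = (-1)^(n-k) * 2^(n-k)"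
    by (rule power_minus)
  have "dval k (legendre n) (-1) = fact (n+k) * of_nat (n choose k) * (-2)^(n-k) / (2^n * fact n)"
    using True legendre_dval[of "-1" k n] by simp
  then show ?thesis using True unfolding Dl_def
    using e by (simp only: m) (simp add: c p e2 field_simps)
qed (simp add: legendre_dval Dl_def)

lemma pderiv_pint: "pderiv (pint p) = p"
proof (rule poly_eqI)
  fix i
  have "coeff (pint p) (Suc i) = coeff p i / real (Suc i)"
  proof (cases "i \<le> degree p")
    case True
    then show ?thesis unfolding pint_def
      by (simp add: nth_default_def del: upt_Suc)
  next
    case False
    then show ?thesis unfolding pint_def
      by (simp add: nth_default_def coeff_eq_0 del: upt_Suc)
  qed
  then show "coeff (pderiv (pint p)) i = coeff p i"
    by (simp add: coeff_pderiv del: of_nat_Suc)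
qed

lemma pderiv_prim: "pderiv (prim p) = p"
  by (simp add: prim_def pderiv_diff pderiv_pint pderiv_pCons)

lemma iter_psi: "n \<le> m \<Longrightarrow> (pderiv ^^ m) (psi i n) = (pderiv ^^ (m - n)) (legendre i)"
proof (induct n arbitrary: m)
  case 0 then show ?case by simp
next
  case (Suc n)
  then obtain m' where m: "m = Suc m'" by (cases m) auto
  have "(pderiv ^^ m) (psi i (Suc n)) = (pderiv ^^ m') (pderiv (prim (psi i n)))"
    by (simp add: m funpow_Suc_right del: funpow.simps)
  also have "\<dots> = (pderiv ^^ (m - Suc n)) (legendre i)"
    using Suc m by (simp add: pderiv_prim)
  finally show ?case .
qed

lemma Dl_0[simp]: "Dl n 0 = 1"
  by (simp add: Dl_def)

lemma Dl_aux_abs: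
  fixes F K M P P2 A B c u v w :: real
  assumes "A*B = 2*u*c + v*w" "P2 = 2*P" "u \<noteq> 0" "v \<noteq> 0" "w \<noteq> 0" "K \<noteq> 0" "M \<noteq> 0" "P \<noteq> 0"
  shows "(A * B * F) / (P2 * (u * K) * (v * w * M)) = c * (F / (P * K * (v * w * M))) + F / (P2 * (u * K) * M)"
  using assms by (simp add: field_simps)

lemma Dl_aux2:
  fixes F N Q Q2 A B c u :: real
  assumes "A*B = 2*u*c" "Q2 = 2*Q" "u \<noteq> 0" "N \<noteq> 0" "Q \<noteq> 0"
  shows "(A * B * F) / (Q2 * (u * N)) = c * (F / (Q * N))"
  using assms by (simp add: field_simps)

lemma Dl_aux:
  fixes F K M :: real and k m :: nat
  assumes "K > 0" "M > 0"
  shows "(real (2*k+m+4) * real (2*k+m+3) * F) / (2^(k+1) * (real (k+1) * K) * (real (m+2) * real (m+1) * M))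
    = (2*(real k+1+real m)+3) * (F / (2^k * K * (real (m+2) * real (m+1) * M)))
      + F / (2^(k+1) * (real (k+1) * K) * M)"
  by (rule Dl_aux_abs) (use assms in \<open>auto simp: algebra_simps\<close>)

lemma Dl_rec0: "Dl (n+2) (Suc k) = (2 * real n + 3) * Dl (n+1) k + Dl n (Suc k)"
proof -
  consider "Suc k \<le> n" | "k = n" | "k = n + 1" | "k > n + 1" by linarith
  then show ?thesis
  proof cases
    case 1
    then obtain m where n: "n = k + 1 + m" by (metis add.commute le_Suc_ex plus_1_eq_Suc)
    have a: "Dl (n+2) (Suc k) = fact (2*k+m+4) / (2^(k+1) * fact (k+1) * fact (m+2))"
      unfolding Dl_def n by (simp add: algebra_simps numeral_eq_Suc)
    have b: "Dl (n+1) k = fact (2*k+m+2) / (2^k * fact k * fact (m+2))"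
      unfolding Dl_def n by (simp add: algebra_simps numeral_eq_Suc)
    have c: "Dl n (Suc k) = fact (2*k+m+2) / (2^(k+1) * fact (k+1) * fact m)"
      unfolding Dl_def n by (simp add: algebra_simps numeral_eq_Suc)
    have f1: "fact (2*k+m+4) = real (2*k+m+4) * real (2*k+m+3) * (fact (2*k+m+2) :: real)"
      by (simp add: numeral_eq_Suc fact_Suc algebra_simps)
    have f2: "fact (m+2) = real (m+2) * real (m+1) * (fact m :: real)"
      by (simp add: numeral_eq_Suc fact_Suc algebra_simps)
    have f3: "fact (k+1) = real (k+1) * (fact k :: real)"
      by (simp add: fact_Suc)
    have e: "(2 * real n + 3) = 2*(real k+1+real m)+3" using n by simp
    show ?thesis unfolding a b c f1 f2 f3 e
      by (rule Dl_aux) auto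
  next
    case 2
    have a: "Dl (n+2) (Suc k) = fact (2*n+3) / (2^(n+1) * fact (n+1))"
      unfolding Dl_def 2 by (simp add: algebra_simps numeral_eq_Suc)
    have b: "Dl (n+1) k = fact (2*n+1) / (2^n * fact n)"
      unfolding Dl_def 2 by (simp add: algebra_simps numeral_eq_Suc)
    have c: "Dl n (Suc k) = 0"
      unfolding Dl_def 2 by simp
    have f1: "fact (2*n+3) = real (2*n+3) * real (2*n+2) * (fact (2*n+1) :: real)"
      by (simp add: numeral_eq_Suc fact_Suc algebra_simps)
    have f3: "fact (n+1) = real (n+1) * (fact n :: real)"
      by (simp add: fact_Suc)
    show ?thesis unfolding a b c f1 f3 add_0_right
      by (rule Dl_aux2) (auto simp: algebra_simps simp del: fact_Suc)
  next
    case 3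
    have a: "Dl (n+2) (Suc k) = fact (2*n+4) / (2^(n+2) * fact (n+2))"
      unfolding Dl_def 3 by (simp add: algebra_simps numeral_eq_Suc)
    have b: "Dl (n+1) k = fact (2*n+2) / (2^(n+1) * fact (n+1))"
      unfolding Dl_def 3 by (simp add: algebra_simps numeral_eq_Suc)
    have c: "Dl n (Suc k) = 0"
      unfolding Dl_def 3 by simp
    have f1: "fact (2*n+4) = real (2*n+4) * real (2*n+3) * (fact (2*n+2) :: real)"
      by (simp add: numeral_eq_Suc fact_Suc algebra_simps)
    have f3: "fact (n+2) = real (n+2) * (fact (n+1) :: real)"
      by (simp add: numeral_eq_Suc fact_Suc algebra_simps)
    show ?thesis unfolding a b c f1 f3 add_0_right
      by (rule Dl_aux2) (auto simp: algebra_simps simp del: fact_Suc)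
  next
    case 4
    then show ?thesis by (simp add: Dl_def)
  qed
qed

lemma Dl_rec: "Dl (Suc (Suc n)) (Suc k) = (2 * real n + 3) * Dl (Suc n) k + Dl n (Suc k)"
  using Dl_rec0[of n k] by (simp add: numeral_eq_Suc)

definition bes :: "nat \<Rightarrow> real poly" where
  "bes n = (\<Sum>k\<le>n. monom (Dl n k) k)"
definition besm :: "nat \<Rightarrow> real poly" where
  "besm n = (\<Sum>k\<le>n. monom ((-1)^k * Dl n k) k)"

lemma coeff_bes: "coeff (bes n) i = Dl n i"
  by (auto simp: bes_def coeff_sum coeff_monom Dl_def)
lemma coeff_besm: "coeff (besm n) i = (-1)^i * Dl n i"
  by (auto simp: besm_def coeff_sum coeff_monom Dl_def)

lemma bes_rec: "bes (n+2) = [:0, 2*n+3:] * bes (n+1) + bes n"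
proof (rule poly_eqI, goal_cases)
  case (1 i)
  show ?case
    by (cases i) (simp_all add: coeff_bes Dl_rec)
qed

lemma besm_rec: "besm (n+2) = besm n - [:0, 2*n+3:] * besm (n+1)"
proof (rule poly_eqI, goal_cases)
  case (1 i)
  show ?case
    by (cases i) (simp_all add: coeff_besm Dl_rec algebra_simps)
qed

lemma bes_W: "bes n * besm (n+1) + besm n * bes (n+1) = 2"
proof (induct n)
  case 0
  have "bes 0 = 1" "besm 0 = 1" "bes 1 = [:1,1:]" "besm 1 = [:1,-1:]"
    by (simp_all add: bes_def besm_def Dl_def monom_0 monom_Suc)
  then show ?case by (simp add: one_pCons numeral_poly)
next
  case (Suc n)
  have "bes (Suc n) * besm (Suc n + 1) + besm (Suc n) * bes (Suc n + 1)
     = bes (n+1) * (besm n - [:0, 2*n+3:] * besm (n+1)) + besm (n+1) * ([:0, 2*n+3:] * bes (n+1) + bes n)"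
    using bes_rec[of n] besm_rec[of n] by simp
  also have "\<dots> = bes n * besm (n+1) + besm n * bes (n+1)"
    by (simp add: algebra_simps)
  finally show ?case using Suc by simp
qed

lemma key_identity:
  assumes "1 \<le> v"
  shows "(\<Sum>j\<le>v. (-1)^j * (Dl (p+1) j * Dl p (v-j) + Dl p j * Dl (p+1) (v-j))) = 0"
proof -
  have "coeff (bes p * besm (p+1) + besm p * bes (p+1)) v = 0"
    using assms by (simp only: bes_W numeral_poly) (simp add: coeff_pCons split: nat.split)
  then have "(\<Sum>i\<le>v. Dl p i * ((-1)^(v-i) * Dl (p+1) (v-i))) + (\<Sum>i\<le>v. (-1)^i * Dl p i * Dl (p+1) (v-i)) = 0"
    by (simp add: coeff_mult coeff_bes coeff_besm)
  moreover have "(\<Sum>i\<le>v. Dl p i * ((-1)^(v-i) * Dl (p+1) (v-i))) = (\<Sum>i\<le>v. Dl p (v-i) * ((-1)^i * Dl (p+1) i))"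
    using sum.atLeastAtMost_rev[of "\<lambda>i. Dl p i * ((-1)^(v-i) * Dl (p+1) (v-i))" 0 v]
    by (simp add: atLeast0AtMost)
  ultimately have "(\<Sum>i\<le>v. Dl (p+1) i * ((-1)^i * Dl p (v-i))) + (\<Sum>i\<le>v. (-1)^i * Dl p i * Dl (p+1) (v-i)) = 0"
    by (simp add: mult_ac)
  then show ?thesis
    by (simp add: sum.distrib[symmetric] algebra_simps)
qed

lemma dval_add: "dval k (p + q) x = dval k p x + dval k q x"
  by (simp add: dval_def iter_pderiv_add)
lemma dval_smult: "dval k (smult c p) x = c * dval k p x"
  by (simp add: dval_def iter_pderiv_smult)
lemma dval_psi: "n \<le> k \<Longrightarrow> dval k (psi i n) x = dval (k - n) (legendre i) x"
  by (simp add: dval_def iter_psi)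

lemma qpol_dval:
  assumes "m \<le> v"
  shows "dval v (qpol p m) x = (dval v (legendre p) x + dval v (legendre (Suc p)) x) / 2
     + (\<Sum>j<m. alpha p (Suc j) * dval (v - Suc j) (legendre p) x + beta p (Suc j) * dval (v - Suc j) (legendre (Suc p)) x)"
  using assms
proof (induct m)
  case 0
  then show ?case by (simp add: dval_add dval_smult)
next
  case (Suc m)
  have h: "dval v (psi i (Suc m)) x = dval (v - Suc m) (legendre i) x" for i
    using dval_psi[of "Suc m" v i x] Suc.prems by simp
  show ?case using Suc by (simp add: dval_add dval_smult h del: psi.simps)
qed

lemma antisym_sum:
  fixes g :: "nat \<Rightarrow> real"
  assumes "\<And>i. i < m \<Longrightarrow> g (m - Suc i) = - g i"
  shows "(\<Sum>i<m. g i) = 0"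
proof -
  have "(\<Sum>i<m. g i) = (\<Sum>i<m. g (m - Suc i))"
    by (rule sum.nat_diff_reindex[symmetric])
  also have "\<dots> = - (\<Sum>i<m. g i)"
    using assms by (simp add: sum_negf)
  finally show ?thesis by simp
qed

lemma sign_aux:
  fixes s a b t A B C D :: real
  assumes "s * a = t" "s * b = -t"
  shows "s / 2 * A * (a * B) + s / 2 * C * (b * D) = t * (A * B - C * D) / 2"
proof -
  have "s / 2 * A * (a * B) + s / 2 * C * (b * D) = (s * a) * A * B / 2 + (s * b) * C * D / 2"
    by (simp add: algebra_simps)
  then show ?thesis unfolding assms by (simp add: algebra_simps)
qed

lemma main:
  assumes "1 \<le> v"
  shows "alpha p v = (-1)^v / 2 * Dl (p+1) v \<and> beta p v = (-1)^v / 2 * Dl p v \<and>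
    dval v (qpol p (v-1)) 1 = (-1)^(v+1) / 2 * (Dl (p+1) v + Dl p v) \<and>
    dval v (qpol p (v-1)) (-1) = (-1)^p * (-1)^(v+1) / 2 * (Dl (p+1) v - Dl p v)"
  using assms
proof (induct v rule: less_induct)
  case (less v)
  define X where "X = Dl (p+1)"
  define Y where "Y = Dl p"
  obtain m where v: "v = Suc m" using less.prems by (cases v) auto
  have IHa: "alpha p (Suc j) = (-1)^(Suc j) / 2 * X (Suc j)" if "j < m" for j
    using less.hyps[of "Suc j"] that v X_def by auto
  have IHb: "beta p (Suc j) = (-1)^(Suc j) / 2 * Y (Suc j)" if "j < m" for j
    using less.hyps[of "Suc j"] that v Y_def by auto
  define f where "f j = (-1)^j * (X j * Y (v-j) + Y j * X (v-j))" for j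
  have key: "(\<Sum>j\<le>v. f j) = 0"
    unfolding f_def X_def Y_def using key_identity[of v p] less.prems by simp
  have "(\<Sum>j\<le>v. f j) = f 0 + (\<Sum>j<m. f (Suc j)) + f (Suc m)"
  proof -
    have "(\<Sum>j\<le>v. f j) = (\<Sum>j\<le>m. f j) + f (Suc m)" unfolding v by (rule sum.atMost_Suc)
    also have "(\<Sum>j\<le>m. f j) = (\<Sum>j<Suc m. f j)" by (simp only: lessThan_Suc_atMost)
    also have "\<dots> = f 0 + (\<Sum>j<m. f (Suc j))" by (rule sum.lessThan_Suc_shift)
    finally show ?thesis .
  qed
  then have S: "(\<Sum>j<m. f (Suc j)) = - (1 + (-1)^v) * (X v + Y v)"
    using key by (simp add: f_def v X_def Y_def algebra_simps)
  have d1: "dval v (qpol p m) 1 = (Y v + X v) / 2 + (\<Sum>j<m. f (Suc j)) / 2"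
  proof -
    have "dval v (qpol p m) 1 = (Y v + X v) / 2
       + (\<Sum>j<m. alpha p (Suc j) * Y (v - Suc j) + beta p (Suc j) * X (v - Suc j))"
      using qpol_dval[of m v p 1] v by (simp add: leg_p1 X_def Y_def)
    also have "(\<Sum>j<m. alpha p (Suc j) * Y (v - Suc j) + beta p (Suc j) * X (v - Suc j)) = (\<Sum>j<m. f (Suc j)) / 2"
      unfolding sum_divide_distrib
    proof (rule sum.cong)
      fix j assume j: "j \<in> {..<m}"
      then have jm: "j < m" by simp
      show "alpha p (Suc j) * Y (v - Suc j) + beta p (Suc j) * X (v - Suc j) = f (Suc j) / 2"
        unfolding IHa[OF jm] IHb[OF jm] f_def by (simp add: algebra_simps)
    qed simp
    finally show ?thesis .
  qed
  then have D1: "dval v (qpol p (v-1)) 1 = (-1)^(v+1) / 2 * (X v + Y v)"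
    using S v by (simp add: field_simps)
  define g where "g j = X (Suc j) * Y (v - Suc j) - Y (Suc j) * X (v - Suc j)" for j
  have G: "(\<Sum>j<m. g j) = 0"
    by (rule antisym_sum) (auto simp: g_def v Suc_diff_Suc)
  have dm: "dval v (qpol p m) (-1) = ((-1)^(p+v) * Y v + (-1)^(Suc p + v) * X v) / 2 + (-1)^(p+v) * (\<Sum>j<m. g j) / 2"
  proof -
    have "dval v (qpol p m) (-1) = ((-1)^(p+v) * Y v + (-1)^(Suc p + v) * X v) / 2
       + (\<Sum>j<m. alpha p (Suc j) * ((-1)^(p + (v - Suc j)) * Y (v - Suc j)) + beta p (Suc j) * ((-1)^(Suc p + (v - Suc j)) * X (v - Suc j)))"
      using qpol_dval[of m v p "-1"] v by (simp add: leg_m1 X_def Y_def)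
    also have "(\<Sum>j<m. alpha p (Suc j) * ((-1)^(p + (v - Suc j)) * Y (v - Suc j)) + beta p (Suc j) * ((-1)^(Suc p + (v - Suc j)) * X (v - Suc j)))
       = (\<Sum>j<m. (-1)^(p+v) * g j / 2)"
    proof (rule sum.cong)
      fix j assume j: "j \<in> {..<m}"
      then have jm: "j < m" by simp
      have e: "(-1::real)^(Suc j) * (-1)^(p + (v - Suc j)) = (-1)^(p+v)"
      proof -
        have "Suc j + (p + (v - Suc j)) = p + v" using j v by auto
        then show ?thesis by (metis power_add)
      qed
      have e2: "(-1::real)^(Suc j) * (-1)^(Suc p + (v - Suc j)) = -((-1)^(p+v))"
        using e by simp
      show "alpha p (Suc j) * ((-1)^(p + (v - Suc j)) * Y (v - Suc j)) + beta p (Suc j) * ((-1)^(Suc p + (v - Suc j)) * X (v - Suc j))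
         = (-1)^(p+v) * g j / 2"
        using j unfolding g_def IHa[of j, OF jm] IHb[of j, OF jm]
        by (intro sign_aux e e2)
    qed simp
    finally show ?thesis by (simp add: sum_distrib_left sum_divide_distrib)
  qed
  then have Dm: "dval v (qpol p (v-1)) (-1) = (-1)^p * (-1)^(v+1) / 2 * (X v - Y v)"
    using G v by (simp add: algebra_simps power_add)
  have pp: "(-1::real)^p * (-1)^p = 1"
    by (metis power_add power_minus1_even mult_2 dvd_triv_left even_add)
  have A: "alpha p v = (-1)^v / 2 * X v"
  proof -
    have "alpha p v = -(dval v (qpol p (v-1)) 1 + (-1)^p * dval v (qpol p (v-1)) (-1))/2"
      using v by (simp add: alpha_step_def)
    also have "\<dots> = -((-1)^(v+1)/2 * (X v + Y v) + ((-1)^p * (-1)^p) * (-1)^(v+1) / 2 * (X v - Y v))/2"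
      unfolding D1 Dm by (simp add: mult.assoc)
    also have "\<dots> = (-1)^v / 2 * X v"
      unfolding pp by (simp add: field_simps)
    finally show ?thesis .
  qed
  have B: "beta p v = (-1)^v / 2 * Y v"
  proof -
    have "beta p v = -(dval v (qpol p (v-1)) 1 - (-1)^p * dval v (qpol p (v-1)) (-1))/2"
      using v by (simp add: beta_step_def)
    also have "\<dots> = -((-1)^(v+1)/2 * (X v + Y v) - ((-1)^p * (-1)^p) * (-1)^(v+1) / 2 * (X v - Y v))/2"
      unfolding D1 Dm by (simp add: mult.assoc)
    also have "\<dots> = (-1)^v / 2 * Y v"
      unfolding pp by (simp add: field_simps)
    finally show ?thesis .
  qed
  show ?case using A B D1 Dm unfolding X_def Y_def by simp
qed

lemma final_aux:
  fixes s w A B Q :: real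
  assumes "s * s = 1" "Q \<noteq> 0" "w * w = 1"
  shows "s / 2 * (A / Q + B / Q) = 1 / (s * 2 * Q) * (A + B)"
    and "w * s / 2 * (A / Q - B / Q) = w / (s * 2 * Q) * (A - B)"
    and "- s / 2 * (A / Q) = -1 / (s * 2 * Q) * A"
proof -
  have s0: "s \<noteq> 0" using assms(1) by auto
  have i: "1 / s = s" using assms(1) s0 by (simp add: field_simps)
  have r: "1 / (s*2*Q) = s / (2*Q)"
  proof -
    have "1 / (s*2*Q) = (1/s) * (1/(2*Q))" by simp
    then show ?thesis unfolding i by simp
  qed
  have r2: "c / (s*2*Q) = c * (1 / (s*2*Q))" for c by simp
  show "s / 2 * (A / Q + B / Q) = 1 / (s * 2 * Q) * (A + B)"
    unfolding r using assms(2) by (simp add: field_simps)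
  show "w * s / 2 * (A / Q - B / Q) = w / (s * 2 * Q) * (A - B)"
    unfolding r2[of w] r using assms(2) by (simp add: field_simps)
  show "- s / 2 * (A / Q) = -1 / (s * 2 * Q) * A"
    unfolding r2[of "-1"] r using assms(2) by (simp add: field_simps)
qed

theorem lemma6:
  fixes p \<nu> :: nat
  assumes "1 \<le> \<nu>" and "\<nu> \<le> p"
  shows "dval \<nu> (qpol p (\<nu> - 1)) 1 =
           1 / ((-2) ^ (\<nu> + 1) * fact \<nu>) *
           (fact (p + 1 + \<nu>) / fact (p + 1 - \<nu>) + fact (p + \<nu>) / fact (p - \<nu>)) \<and>
         dval \<nu> (qpol p (\<nu> - 1)) (-1) =
           (-1) ^ p / ((-2) ^ (\<nu> + 1) * fact \<nu>) *
           (fact (p + 1 + \<nu>) / fact (p + 1 - \<nu>) - fact (p + \<nu>) / fact (p - \<nu>)) \<and>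
         alpha p \<nu> = -1 / ((-2) ^ (\<nu> + 1) * fact \<nu>) * (fact (p + 1 + \<nu>) / fact (p + 1 - \<nu>)) \<and>
         beta p \<nu> = -1 / ((-2) ^ (\<nu> + 1) * fact \<nu>) * (fact (p + \<nu>) / fact (p - \<nu>))"
proof -
  define v where "v = \<nu>"
  define A where "A = fact (p + 1 + v) / (fact (p + 1 - v) :: real)"
  define B where "B = fact (p + v) / (fact (p - v) :: real)"
  define Q where "Q = 2^v * (fact v :: real)"
  define s where "s = (-1::real)^(v+1)"
  define w where "w = (-1::real)^p"
  have Q0: "Q \<noteq> 0" unfolding Q_def by simp
  have ss: "s * s = 1" unfolding s_def by (metis power_add power_minus1_even mult_2 dvd_triv_left)
  have ww: "w * w = 1" unfolding w_def by (metis power_add power_minus1_even mult_2 dvd_triv_left)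
  have X: "Dl (p+1) v = A / Q"
    using assms unfolding A_def Q_def Dl_def v_def by (simp add: field_simps)
  have Y: "Dl p v = B / Q"
    using assms unfolding B_def Q_def Dl_def v_def by (simp add: field_simps)
  have den: "(-2::real) ^ (v + 1) * fact v = s * 2 * Q"
    unfolding s_def Q_def by (subst power_minus) (simp add: algebra_simps)
  have sv: "(-1::real)^v = - s" unfolding s_def by simp
  have M: "alpha p v = (-1)^v / 2 * Dl (p+1) v \<and> beta p v = (-1)^v / 2 * Dl p v \<and>
    dval v (qpol p (v-1)) 1 = (-1)^(v+1) / 2 * (Dl (p+1) v + Dl p v) \<and>
    dval v (qpol p (v-1)) (-1) = (-1)^p * (-1)^(v+1) / 2 * (Dl (p+1) v - Dl p v)"
    using main assms v_def by blast
  then have M1: "alpha p v = - s / 2 * (A / Q)" and M2: "beta p v = - s / 2 * (B / Q)"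
    and M3: "dval v (qpol p (v-1)) 1 = s / 2 * (A / Q + B / Q)"
    and M4: "dval v (qpol p (v-1)) (-1) = w * s / 2 * (A / Q - B / Q)"
    unfolding X Y sv by (simp_all add: s_def w_def)
  show ?thesis
    unfolding v_def[symmetric] A_def[symmetric] B_def[symmetric] den w_def[symmetric]
    by (simp only: M1 M2 M3 M4 final_aux[OF ss Q0 ww])
qed

end
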